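(* Let $n$ be a non-negative integer and $r,s\in\mathbb{C}\setminus\mathbb{Z}^{-}$ with $s\neq0$ and $r-s\notin\mathbb{Z}^{-}$. Then \[ \sum_{k=0}^{n}(-1)^k2^{2k}\frac{\binom{n+k}{n-k}}{(k+s)\binom{k+r}{k+s}}=\sum_{k=0}^{n}(-1)^{n-k}\frac{\binom{2n+1}{2k+1}}{(n-k+s)\binom{n+r}{n-k+s}}. \]
   Context: $\mathbb{Z}^{-}$ denotes the set of negative integers. Binomial coefficients with complex entries: $\binom{x}{y}=\frac{\Gamma(x+1)}{\Gamma(y+1)\Gamma(x-y+1)}$. *)

theory Defs
  imports "HOL-Analysis.Analysis"
begin

definition cbinom :: "complex \<Rightarrow> complex \<Rightarrow> complex" where
  "cbinom x y = Gamma (x + 1) / (Gamma (y + 1) * Gamma (x - y + 1))"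

definition neg_ints :: "complex set" where
  "neg_ints = {of_int m | m. m < 0}"

end

theory Submission
  imports Defs
begin

definition Fs :: "nat \<Rightarrow> 'a \<Rightarrow> 'a \<Rightarrow> 'a::comm_ring_1" where
  "Fs n w p = (\<Sum>k\<le>n. of_nat ((n+k) choose (2*k)) * w^k * p^(n-k))"
definition Hs :: "nat \<Rightarrow> 'a \<Rightarrow> 'a \<Rightarrow> 'a::comm_ring_1" where
  "Hs n w p = (\<Sum>k\<le>n. of_nat ((n+1+k) choose (2*k+1)) * w^k * p^(n-k))"

lemma H_rec: "Hs (Suc n) w p = p * Hs n w p + Fs (Suc n) w p"
proof -
  have "Hs (Suc n) w p = (\<Sum>k\<le>Suc n. of_nat ((n+1+k) choose (2*k+1)) * w^k * p^(Suc n-k)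
      + of_nat ((Suc n+k) choose (2*k)) * w^k * p^(Suc n-k))"
    unfolding Hs_def
  proof (rule sum.cong[OF refl])
    fix k
    have "(Suc n + 1 + k) choose (2*k+1) = ((n+1+k) choose (2*k+1)) + ((Suc n+k) choose (2*k))"
      by (metis Suc_eq_plus1 add_Suc binomial_Suc_Suc add.commute)
    then show "of_nat ((Suc n + 1 + k) choose (2*k+1)) * w^k * p^(Suc n-k) =
      of_nat ((n+1+k) choose (2*k+1)) * w^k * p^(Suc n-k)
      + of_nat ((Suc n+k) choose (2*k)) * w^k * p^(Suc n-k)"
      by (simp add: algebra_simps)
  qed
  also have "\<dots> = (\<Sum>k\<le>Suc n. of_nat ((n+1+k) choose (2*k+1)) * w^k * p^(Suc n-k)) + Fs (Suc n) w p"
    unfolding Fs_def by (simp add: sum.distrib)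
  also have "(\<Sum>k\<le>Suc n. of_nat ((n+1+k) choose (2*k+1)) * w^k * p^(Suc n-k)) = p * Hs n w p"
    unfolding Hs_def sum_distrib_left
    by (simp add: Suc_diff_le algebra_simps binomial_eq_0)
  finally show ?thesis .
qed

lemma F_rec: "Fs (Suc n) w p = p * Fs n w p + w * Hs n w p"
proof -
  have "Fs (Suc n) w p = p^(Suc n) + (\<Sum>i\<le>n. of_nat ((n+2+i) choose (2*i+2)) * w^(Suc i) * p^(n-i))"
    unfolding Fs_def by (subst sum.atMost_Suc_shift) (simp add: algebra_simps)
  also have "(\<Sum>i\<le>n. of_nat ((n+2+i) choose (2*i+2)) * w^(Suc i) * p^(n-i))
     = (\<Sum>i\<le>n. of_nat ((n+1+i) choose (2*i+2)) * w^(Suc i) * p^(n-i)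
         + w * (of_nat ((n+1+i) choose (2*i+1)) * w^i * p^(n-i)))"
  proof (rule sum.cong[OF refl])
    fix i
    have "(n+2+i) choose (2*i+2) = ((n+1+i) choose (2*i+2)) + ((n+1+i) choose (2*i+1))"
      by (metis Suc_eq_plus1 add_Suc binomial_Suc_Suc add.commute add_2_eq_Suc' one_add_one add.assoc)
    then show "of_nat ((n+2+i) choose (2*i+2)) * w^(Suc i) * p^(n-i) =
       of_nat ((n+1+i) choose (2*i+2)) * w^(Suc i) * p^(n-i)
         + w * (of_nat ((n+1+i) choose (2*i+1)) * w^i * p^(n-i))"
      by (simp add: algebra_simps)
  qed
  also have "\<dots> = (\<Sum>i\<le>n. of_nat ((n+1+i) choose (2*i+2)) * w^(Suc i) * p^(n-i)) + w * Hs n w p"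
    unfolding Hs_def sum_distrib_left by (simp add: sum.distrib)
  also have "p^(Suc n) + ((\<Sum>i\<le>n. of_nat ((n+1+i) choose (2*i+2)) * w^(Suc i) * p^(n-i)) + w * Hs n w p)
      = (\<Sum>k\<le>Suc n. of_nat ((n+k) choose (2*k)) * w^k * p^(Suc n-k)) + w * Hs n w p"
    by (subst sum.atMost_Suc_shift) (simp add: algebra_simps)
  also have "(\<Sum>k\<le>Suc n. of_nat ((n+k) choose (2*k)) * w^k * p^(Suc n-k)) = p * Fs n w p"
    unfolding Fs_def sum_distrib_left
    by (simp add: Suc_diff_le algebra_simps binomial_eq_0)
  finally show ?thesis by simp
qed

lemma FH_closed:
  fixes a b :: "'a::comm_ring_1"
  shows "(a+b) * Fs n ((a-b)^2) (a*b) = a^(2*n+1) + b^(2*n+1)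
       \<and> (a+b) * (a-b) * Hs n ((a-b)^2) (a*b) = a^(2*n+2) - b^(2*n+2)"
proof (induction n)
  case 0
  then show ?case by (simp add: Fs_def Hs_def algebra_simps power2_eq_square)
next
  case (Suc n)
  have F: "(a+b) * Fs (Suc n) ((a-b)^2) (a*b) = a^(2*Suc n+1) + b^(2*Suc n+1)"
  proof -
    have "(a+b) * Fs (Suc n) ((a-b)^2) (a*b) = a*b*((a+b) * Fs n ((a-b)^2) (a*b))
       + (a-b)*((a+b) * (a-b) * Hs n ((a-b)^2) (a*b))"
      by (simp add: F_rec algebra_simps power2_eq_square)
    also have "\<dots> = a*b*(a^(2*n+1) + b^(2*n+1)) + (a-b)*(a^(2*n+2) - b^(2*n+2))"
      using Suc by simp
    also have "\<dots> = a^(2*Suc n+1) + b^(2*Suc n+1)"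
      by (simp add: algebra_simps power_Suc)
    finally show ?thesis .
  qed
  have "(a+b) * (a-b) * Hs (Suc n) ((a-b)^2) (a*b) = a*b*((a+b) * (a-b) * Hs n ((a-b)^2) (a*b))
       + (a-b)*((a+b) * Fs (Suc n) ((a-b)^2) (a*b))"
    by (simp add: H_rec algebra_simps)
  also have "\<dots> = a*b*(a^(2*n+2) - b^(2*n+2)) + (a-b)*(a^(2*Suc n+1) + b^(2*Suc n+1))"
    using Suc F by simp
  also have "\<dots> = a^(2*Suc n+2) - b^(2*Suc n+2)"
    by (simp add: algebra_simps power_Suc)
  finally show ?case using F by simp
qed

lemma sum_even_odd_split:
  fixes f :: "nat \<Rightarrow> 'a::comm_monoid_add"
  shows "(\<Sum>k<2*N. f k) = (\<Sum>j<N. f (2*j) + f (2*j+1))"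
  by (induction N) (simp_all add: add.assoc)

lemma alg0:
  fixes a w b v :: "'a::comm_ring_1"
  shows "a * w + a * w + (b * v + b * (- v)) = 2 * (a * w)"
  by (simp add: algebra_simps mult_2)

lemma even_binom:
  fixes z :: "'a::comm_ring_1"
  shows "2 * (\<Sum>j\<le>n. of_nat ((2*n+1) choose (2*j)) * z^(2*j)) = (1+z)^(2*n+1) + (1-z)^(2*n+1)"
proof -
  let ?m = "2*n+1"
  have "(1+z)^?m + (1-z)^?m = (\<Sum>k\<le>?m. of_nat (?m choose k) * z^k) + (\<Sum>k\<le>?m. of_nat (?m choose k) * (-z)^k)"
  proof -
    have b1: "(1+z)^?m = (\<Sum>k\<le>?m. of_nat (?m choose k) * z^k)"
      using binomial_ring[of z 1 ?m] by (simp add: add.commute)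
    have e: "1 - z = -z + 1" by simp
    have b2: "(1-z)^?m = (\<Sum>k\<le>?m. of_nat (?m choose k) * (-z)^k)"
      unfolding e using binomial_ring[of "-z" 1 ?m] by simp
    show ?thesis by (simp only: b1 b2)
  qed
  also have "\<dots> = (\<Sum>k<2*(n+1). of_nat (?m choose k) * z^k + of_nat (?m choose k) * (-z)^k)"
  proof -
    have "{..?m} = {..<2*(n+1)}" by auto
    then show ?thesis by (simp only: sum.distrib)
  qed
  also have "\<dots> = (\<Sum>j<n+1. 2 * (of_nat (?m choose (2*j)) * z^(2*j)))"
  proof (subst sum_even_odd_split, rule sum.cong[OF refl])
    fix x
    have h1: "(-z)^(2*x) = z^(2*x)" by simp
    have h2: "(-z)^(2*x+1) = -(z^(2*x+1))" by simp
    show "of_nat (?m choose (2*x)) * z ^ (2*x) + of_nat (?m choose (2*x)) * (-z) ^ (2*x) +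
         (of_nat (?m choose (2*x+1)) * z ^ (2*x+1) + of_nat (?m choose (2*x+1)) * (-z) ^ (2*x+1)) =
         2 * (of_nat (?m choose (2*x)) * z ^ (2*x))"
      unfolding h1 h2 by (rule alg0)
  qed
  also have "\<dots> = 2 * (\<Sum>j\<le>n. of_nat ((2*n+1) choose (2*j)) * z^(2*j))"
  proof -
    have "{..<n+1} = {..n}" by auto
    then show ?thesis by (simp only: sum_distrib_left)
  qed
  finally show ?thesis by simp
qed

lemma poly_ident:
  fixes y :: complex
  shows "(\<Sum>k\<le>n. of_nat ((n+k) choose (2*k)) * (-4*y)^k * (1+y)^(n-k))
       = (\<Sum>j\<le>n. of_nat ((2*n+1) choose (2*j)) * (-y)^j)"
proof -
  define z where "z = csqrt (-y)"
  have z2: "z^2 = -y" unfolding z_def by simp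
  have "(1+z) + (1-z) = (2::complex)" by simp
  have e1: "((1+z) - (1-z))^2 = -4*y" using z2 by (simp add: algebra_simps power2_eq_square)
  have e2: "(1+z) * (1-z) = 1+y" using z2 by (simp add: algebra_simps power2_eq_square)
  have "2 * Fs n (-4*y) (1+y) = (1+z)^(2*n+1) + (1-z)^(2*n+1)"
    using conjunct1[OF FH_closed[of "1+z" "1-z" n]] e1 e2 by simp
  also have "\<dots> = 2 * (\<Sum>j\<le>n. of_nat ((2*n+1) choose (2*j)) * z^(2*j))"
    by (rule even_binom[symmetric])
  finally have "Fs n (-4*y) (1+y) = (\<Sum>j\<le>n. of_nat ((2*n+1) choose (2*j)) * (z^2)^j)"
    by (simp add: power_mult)
  then show ?thesis unfolding Fs_def z2 by (simp add: mult.assoc)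
qed

lemma swap_sum:
  fixes a g :: "nat \<Rightarrow> 'a::comm_semiring_1"
  shows "(\<Sum>k\<le>n. a k * (\<Sum>i\<le>n-k. of_nat ((n-k) choose i) * g (k+i)))
       = (\<Sum>j\<le>n. (\<Sum>k\<le>j. a k * of_nat ((n-k) choose (j-k))) * g j)"
proof -
  have "(\<Sum>k\<le>n. a k * (\<Sum>i\<le>n-k. of_nat ((n-k) choose i) * g (k+i)))
      = (\<Sum>(k,i)\<in>{(k,i). k+i \<le> n}. a k * of_nat ((n-k) choose i) * g (k+i))"
    by (simp add: pairs_le_eq_Sigma sum.Sigma sum_distrib_left mult.assoc)
  also have "\<dots> = (\<Sum>j\<le>n. \<Sum>k\<le>j. a k * of_nat ((n-k) choose (j-k)) * g (k+(j-k)))"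
    by (rule sum.triangle_reindex_eq)
  also have "\<dots> = (\<Sum>j\<le>n. (\<Sum>k\<le>j. a k * of_nat ((n-k) choose (j-k))) * g j)"
    by (auto simp: sum_distrib_right intro!: sum.cong)
  finally show ?thesis .
qed

definition cc :: "nat \<Rightarrow> nat \<Rightarrow> complex" where
  "cc n j = (\<Sum>k\<le>j. (-4)^k * of_nat ((n+k) choose (2*k)) * of_nat ((n-k) choose (j-k)))"

lemma coeff_ident:
  assumes "j \<le> n"
  shows "cc n j = (-1)^j * of_nat ((2*n+1) choose (2*j))"
proof -
  have "\<forall>y::complex. (\<Sum>j\<le>n. cc n j * y^j) = (\<Sum>j\<le>n. ((-1)^j * of_nat ((2*n+1) choose (2*j))) * y^j)"
  proof
    fix y :: complex
    have "(\<Sum>j\<le>n. cc n j * y^j) = (\<Sum>k\<le>n. ((-4)^k * of_nat ((n+k) choose (2*k))) *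
            (\<Sum>i\<le>n-k. of_nat ((n-k) choose i) * y^(k+i)))"
      unfolding cc_def by (subst swap_sum) (simp add: mult.assoc)
    also have "\<dots> = (\<Sum>k\<le>n. of_nat ((n+k) choose (2*k)) * (-4*y)^k * (1+y)^(n-k))"
    proof (rule sum.cong[OF refl])
      fix k
      have hb: "(1+y)^(n-k) = (\<Sum>i\<le>n-k. of_nat ((n-k) choose i) * y^i)"
        using binomial_ring[of y 1 "n-k"] by (simp add: add.commute)
      show "((-4)^k * of_nat ((n+k) choose (2*k))) *
            (\<Sum>i\<le>n-k. of_nat ((n-k) choose i) * y^(k+i)) =
            of_nat ((n+k) choose (2*k)) * (-4*y)^k * (1+y)^(n-k)"
      proof -
        have "(-4*y)^k = (-4)^k * y^k" by (rule power_mult_distrib)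
        with hb show ?thesis
          by (simp add: sum_distrib_left power_add mult_ac)
      qed
    qed
    also have "\<dots> = (\<Sum>j\<le>n. of_nat ((2*n+1) choose (2*j)) * (-y)^j)"
      by (rule poly_ident)
    also have "\<dots> = (\<Sum>j\<le>n. ((-1)^j * of_nat ((2*n+1) choose (2*j))) * y^j)"
    proof (rule sum.cong[OF refl])
      fix j
      have "(-y)^j = (-1)^j * y^j" by (rule power_minus)
      then show "of_nat ((2*n+1) choose (2*j)) * (-y)^j = ((-1)^j * of_nat ((2*n+1) choose (2*j))) * y^j"
        by (simp only: mult_ac)
    qed
    finally show "(\<Sum>j\<le>n. cc n j * y^j) = (\<Sum>j\<le>n. ((-1)^j * of_nat ((2*n+1) choose (2*j))) * y^j)" .
  qed
  then have "\<forall>i\<le>n. cc n i = (-1)^i * of_nat ((2*n+1) choose (2*i))"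
    by (rule polyfun_eq_coeffs[THEN iffD1])
  then show ?thesis using assms by blast
qed

lemma np1:
  assumes "x \<notin> neg_ints"
  shows "x + 1 + of_nat k \<notin> \<int>\<^sub>\<le>\<^sub>0"
proof
  assume "x + 1 + of_nat k \<in> \<int>\<^sub>\<le>\<^sub>0"
  then obtain m where "x + 1 + of_nat k = - of_nat m" by (auto elim!: nonpos_Ints_cases')
  then have "x = of_int (- int m - int k - 1)" by (simp add: algebra_simps)
  then have "x \<in> neg_ints" unfolding neg_ints_def by (auto intro!: exI[of _ "- int m - int k - 1"])
  with assms show False by simp
qed

lemma np0:
  assumes "x \<notin> neg_ints" "x \<noteq> 0"
  shows "x + of_nat k \<notin> \<int>\<^sub>\<le>\<^sub>0"
proof
  assume "x + of_nat k \<in> \<int>\<^sub>\<le>\<^sub>0"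
  then obtain m where h: "x + of_nat k = - of_nat m" by (auto elim!: nonpos_Ints_cases')
  then have "x = of_int (- int m - int k)" by (simp add: algebra_simps)
  moreover have "int m + int k \<noteq> 0"
  proof
    assume "int m + int k = 0"
    then have "m = 0" "k = 0" by auto
    with h assms(2) show False by simp
  qed
  ultimately have "x \<in> neg_ints" unfolding neg_ints_def by (auto intro!: exI[of _ "- int m - int k"])
  with assms show False by simp
qed

lemma Gamma_poch:
  fixes z :: complex
  assumes "z \<notin> \<int>\<^sub>\<le>\<^sub>0"
  shows "Gamma (z + of_nat k) = pochhammer z k * Gamma z"
  using pochhammer_Gamma[OF assms, of k] assms by (simp add: Gamma_eq_zero_iff field_simps)

lemma core:
  fixes s d :: complex
  shows "(\<Sum>k\<le>n. (-4)^k * of_nat ((n+k) choose (2*k)) * (pochhammer s k * pochhammer (s + d + of_nat k) (n-k)))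
       = (\<Sum>k\<le>n. (-1)^(n-k) * of_nat ((2*n+1) choose (2*k+1)) * (pochhammer s (n-k) * pochhammer d k))"
proof -
  let ?g = "\<lambda>j. pochhammer s j * pochhammer d (n-j)"
  have "(\<Sum>k\<le>n. (-4)^k * of_nat ((n+k) choose (2*k)) * (pochhammer s k * pochhammer (s + d + of_nat k) (n-k)))
      = (\<Sum>k\<le>n. ((-4)^k * of_nat ((n+k) choose (2*k))) * (\<Sum>i\<le>n-k. of_nat ((n-k) choose i) * ?g (k+i)))"
  proof (rule sum.cong[OF refl])
    fix k assume "k \<in> {..n}"
    have "pochhammer (s + d + of_nat k) (n-k) = pochhammer ((s + of_nat k) + d) (n-k)"
      by (simp add: algebra_simps)
    also have "\<dots> = (\<Sum>i\<le>n-k. of_nat ((n-k) choose i) * pochhammer (s + of_nat k) i * pochhammer d (n-k-i))"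
      by (rule pochhammer_binomial_sum)
    finally have "pochhammer s k * pochhammer (s + d + of_nat k) (n-k)
       = (\<Sum>i\<le>n-k. of_nat ((n-k) choose i) * ?g (k+i))"
      by (simp add: sum_distrib_left pochhammer_product' mult_ac diff_diff_add)
    then show "(-4)^k * of_nat ((n+k) choose (2*k)) * (pochhammer s k * pochhammer (s + d + of_nat k) (n-k))
      = ((-4)^k * of_nat ((n+k) choose (2*k))) * (\<Sum>i\<le>n-k. of_nat ((n-k) choose i) * ?g (k+i))"
      by simp
  qed
  also have "\<dots> = (\<Sum>j\<le>n. cc n j * ?g j)"
    unfolding cc_def by (rule swap_sum)
  also have "\<dots> = (\<Sum>j\<le>n. (-1)^j * of_nat ((2*n+1) choose (2*j)) * ?g j)"
    by (rule sum.cong[OF refl]) (simp add: coeff_ident)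
  also have "\<dots> = (\<Sum>k\<le>n. (-1)^(n-k) * of_nat ((2*n+1) choose (2*k+1)) * (pochhammer s (n-k) * pochhammer d k))"
  proof -
    have "(\<Sum>j\<le>n. (-1)^j * of_nat ((2*n+1) choose (2*j)) * ?g j)
        = (\<Sum>j=0..n. (-1)^j * of_nat ((2*n+1) choose (2*j)) * ?g j)"
      by (simp add: atLeast0AtMost)
    also have "\<dots> = (\<Sum>k=0..n. (-1)^(n-k) * of_nat ((2*n+1) choose (2*(n-k))) * ?g (n-k))"
      by (subst sum.atLeastAtMost_rev) simp
    also have "\<dots> = (\<Sum>k=0..n. (-1)^(n-k) * of_nat ((2*n+1) choose (2*k+1)) * (pochhammer s (n-k) * pochhammer d k))"
    proof (rule sum.cong[OF refl])
      fix k assume "k \<in> {0..n}"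
      then have kn: "k \<le> n" by simp
      have "(2*n+1) choose (2*(n-k)) = (2*n+1) choose (2*n+1 - 2*(n-k))"
        by (rule binomial_symmetric) (use kn in simp)
      also have "2*n+1 - 2*(n-k) = 2*k+1" using kn by simp
      finally show "(-1)^(n-k) * of_nat ((2*n+1) choose (2*(n-k))) * ?g (n-k)
          = (-1)^(n-k) * of_nat ((2*n+1) choose (2*k+1)) * (pochhammer s (n-k) * pochhammer d k)"
        using kn by simp
    qed
    finally show ?thesis by (simp add: atLeast0AtMost)
  qed
  finally show ?thesis .
qed

lemma alg1:
  fixes c sk pr gr ps gs gd q :: complex
  assumes "gs\<noteq>0" "gr\<noteq>0" "gd\<noteq>0" "sk\<noteq>0" "pr\<noteq>0" "q\<noteq>0" "ps\<noteq>0"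
  shows "c / (sk * (pr*gr / ((sk*ps*gs) * gd))) = (gs*gd/gr) * (c * (ps * q)) / (pr * q)"
  using assms by (simp add: field_simps)

lemma alg2:
  fixes c sj P gr ps gs pd gd :: complex
  assumes "gs\<noteq>0" "gr\<noteq>0" "gd\<noteq>0" "sj\<noteq>0" "P\<noteq>0" "ps\<noteq>0" "pd\<noteq>0"
  shows "c / (sj * (P*gr / ((sj*ps*gs) * (pd*gd)))) = (gs*gd/gr) * (c * (ps * pd)) / P"
  using assms by (simp add: field_simps)

theorem theorem26:
  fixes n :: nat and r s :: complex
  assumes "r \<notin> neg_ints" and "s \<notin> neg_ints" and "s \<noteq> 0" and "r - s \<notin> neg_ints"
  shows "(\<Sum>k=0..n. (-1)^k * 2^(2*k) * of_nat ((n+k) choose (n-k))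
            / ((of_nat k + s) * cbinom (of_nat k + r) (of_nat k + s)))
       = (\<Sum>k=0..n. (-1)^(n-k) * of_nat ((2*n+1) choose (2*k+1))
            / ((of_nat (n-k) + s) * cbinom (of_nat n + r) (of_nat (n-k) + s)))"
proof -
  have hs: "\<And>k. s + of_nat k \<notin> \<int>\<^sub>\<le>\<^sub>0" using np0[OF assms(2,3)] by blast
  have hr: "\<And>k. r + 1 + of_nat k \<notin> \<int>\<^sub>\<le>\<^sub>0" using np1[OF assms(1)] by blast
  have hd: "\<And>k. r - s + 1 + of_nat k \<notin> \<int>\<^sub>\<le>\<^sub>0" using np1[OF assms(4)] by blast
  have hs0: "s \<notin> \<int>\<^sub>\<le>\<^sub>0" using hs[of 0] by simp
  have hr0: "r + 1 \<notin> \<int>\<^sub>\<le>\<^sub>0" using hr[of 0] by simp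
  have hd0: "r - s + 1 \<notin> \<int>\<^sub>\<le>\<^sub>0" using hd[of 0] by simp
  have Gs: "Gamma s \<noteq> 0" using hs0 by (simp add: Gamma_eq_zero_iff)
  have Gr: "Gamma (r+1) \<noteq> 0" using hr0 by (simp add: Gamma_eq_zero_iff)
  have Gd: "Gamma (r-s+1) \<noteq> 0" using hd0 by (simp add: Gamma_eq_zero_iff)
  have Ps: "\<And>k. pochhammer s k \<noteq> 0"
  proof -
    fix k
    have "Gamma (s + of_nat k) \<noteq> 0" using hs[of k] by (simp add: Gamma_eq_zero_iff)
    then show "pochhammer s k \<noteq> 0" using Gamma_poch[OF hs0, of k] by auto
  qed
  have Pr: "\<And>k. pochhammer (r+1) k \<noteq> 0"
  proof -
    fix k
    have "Gamma (r + 1 + of_nat k) \<noteq> 0" using hr[of k] by (simp add: Gamma_eq_zero_iff)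
    then show "pochhammer (r+1) k \<noteq> 0" using Gamma_poch[OF hr0, of k] by auto
  qed
  have Pd: "\<And>k. pochhammer (r-s+1) k \<noteq> 0"
  proof -
    fix k
    have "Gamma (r - s + 1 + of_nat k) \<noteq> 0" using hd[of k] by (simp add: Gamma_eq_zero_iff)
    then show "pochhammer (r-s+1) k \<noteq> 0" using Gamma_poch[OF hd0, of k] by auto
  qed
  have Pr': "\<And>k m. pochhammer (r + 1 + of_nat k) m \<noteq> 0"
  proof -
    fix k m
    have "pochhammer (r+1) (k+m) = pochhammer (r+1) k * pochhammer (r + 1 + of_nat k) m"
      by (rule pochhammer_product')
    then show "pochhammer (r + 1 + of_nat k) m \<noteq> 0" using Pr[of "k+m"] by auto
  qed
  have sk0: "\<And>k. of_nat k + s \<noteq> 0" using hs by (metis add.commute zero_in_nonpos_Ints)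
  have Gsk: "\<And>k. Gamma (of_nat k + s + 1) = (of_nat k + s) * pochhammer s k * Gamma s"
  proof -
    fix k
    have eq: "of_nat k + s + 1 = (s + of_nat k) + 1" by simp
    have "Gamma (of_nat k + s + 1) = (s + of_nat k) * Gamma (s + of_nat k)"
      by (subst eq) (rule Gamma_plus1[OF hs[of k]])
    also have "\<dots> = (of_nat k + s) * (pochhammer s k * Gamma s)"
      by (subst Gamma_poch[OF hs0]) (rule arg_cong2[where f="(*)"], rule add.commute, rule refl)
    finally show "Gamma (of_nat k + s + 1) = (of_nat k + s) * pochhammer s k * Gamma s"
      by (simp only: mult.assoc)
  qed
  have Grk: "\<And>k. Gamma (of_nat k + r + 1) = pochhammer (r+1) k * Gamma (r+1)"
  proof -
    fix k
    have eq: "of_nat k + r + 1 = r + 1 + of_nat k" by simp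
    show "Gamma (of_nat k + r + 1) = pochhammer (r+1) k * Gamma (r+1)"
      by (subst eq) (rule Gamma_poch[OF hr0])
  qed
  define K where "K = Gamma s * Gamma (r-s+1) / Gamma (r+1)"
  define P where "P = pochhammer (r+1) n"
  have P0: "P \<noteq> 0" unfolding P_def by (rule Pr)
  have L: "(\<Sum>k=0..n. (-1)^k * 2^(2*k) * of_nat ((n+k) choose (n-k))
            / ((of_nat k + s) * cbinom (of_nat k + r) (of_nat k + s)))
      = (\<Sum>k\<le>n. K * ((-4)^k * of_nat ((n+k) choose (2*k)) * (pochhammer s k * pochhammer (s + (r-s+1) + of_nat k) (n-k))) / P)"
    unfolding atLeast0AtMost
  proof (rule sum.cong[OF refl])
    fix k assume "k \<in> {..n}"
    then have kn: "k \<le> n" by simp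
    have c1: "(n+k) choose (n-k) = (n+k) choose (2*k)"
      using binomial_symmetric[of "n-k" "n+k"] kn by (simp add: mult_2)
    have c2: "(-1)^k * 2^(2*k) = ((-4)::complex)^k"
      by (simp add: power_mult power_mult_distrib[symmetric])
    have Pk: "P = pochhammer (r+1) k * pochhammer (s + (r-s+1) + of_nat k) (n-k)"
      unfolding P_def using pochhammer_product'[of "r+1" k "n-k"] kn by simp
    have cb: "cbinom (of_nat k + r) (of_nat k + s) =
       pochhammer (r+1) k * Gamma (r+1) / (((of_nat k + s) * pochhammer s k * Gamma s) * Gamma (r-s+1))"
    proof -
      have e1: "of_nat k + r - (of_nat k + s) + 1 = r - s + 1" by simp
      show ?thesis unfolding cbinom_def e1 Grk[symmetric] Gsk[symmetric] by simp
    qed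
    have q0: "pochhammer (s + (r-s+1) + of_nat k) (n-k) \<noteq> 0" using Pr'[of k "n-k"] by simp
    show "(-1)^k * 2^(2*k) * of_nat ((n+k) choose (n-k))
            / ((of_nat k + s) * cbinom (of_nat k + r) (of_nat k + s))
        = K * ((-4)^k * of_nat ((n+k) choose (2*k)) * (pochhammer s k * pochhammer (s + (r-s+1) + of_nat k) (n-k))) / P"
      unfolding c1 c2 cb Pk K_def
      by (rule alg1[OF Gs Gr Gd sk0 Pr q0 Ps])
  qed
  have R: "(\<Sum>k=0..n. (-1)^(n-k) * of_nat ((2*n+1) choose (2*k+1))
            / ((of_nat (n-k) + s) * cbinom (of_nat n + r) (of_nat (n-k) + s)))
      = (\<Sum>k\<le>n. K * ((-1)^(n-k) * of_nat ((2*n+1) choose (2*k+1)) * (pochhammer s (n-k) * pochhammer (r-s+1) k)) / P)"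
    unfolding atLeast0AtMost
  proof (rule sum.cong[OF refl])
    fix k assume "k \<in> {..n}"
    then have kn: "k \<le> n" by simp
    have e: "of_nat n + r - (of_nat (n-k) + s) + 1 = r - s + 1 + of_nat k"
      using kn by (simp add: of_nat_diff algebra_simps)
    have cb: "cbinom (of_nat n + r) (of_nat (n-k) + s) =
       P * Gamma (r+1) / (((of_nat (n-k) + s) * pochhammer s (n-k) * Gamma s) * (pochhammer (r-s+1) k * Gamma (r-s+1)))"
      unfolding cbinom_def e P_def Grk[symmetric] Gsk[symmetric] Gamma_poch[OF hd0, symmetric]
      by simp
    show "(-1)^(n-k) * of_nat ((2*n+1) choose (2*k+1))
            / ((of_nat (n-k) + s) * cbinom (of_nat n + r) (of_nat (n-k) + s))
       = K * ((-1)^(n-k) * of_nat ((2*n+1) choose (2*k+1)) * (pochhammer s (n-k) * pochhammer (r-s+1) k)) / P"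
      unfolding cb K_def
      by (rule alg2[OF Gs Gr Gd sk0 P0 Ps Pd])
  qed
  have dist: "\<And>f. (\<Sum>k\<le>n. K * f k / P) = K * (\<Sum>k\<le>n. f k) / P"
    by (simp add: sum_distrib_left sum_divide_distrib)
  show ?thesis
    unfolding L R dist core[of n s "r-s+1"] by (rule refl)
qed

end
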